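(* Let $d\ge1$, $m\in\mathbb{N}$ ($m\ge1$), and let $A_0,A_1\in\mathbb{R}^{d\times d}$ be constant matrices. Let $\Psi:\mathbb{Z}_{-m}^{0}\to\mathbb{R}^{d\times d}$ satisfy $A_1\Psi(u)=\Psi(u)A_1$ for all $u\in\mathbb{Z}_{-m}^{0}$, and let $Z$ be the discrete function defined in the context. Then \[ X(u)=Z(u)\Psi(-m)+\sum_{r=-m+1}^{0}Z(u-m-r)\,\Delta\Psi(r-1),\qquad u\in\mathbb{Z}_{-m}^{\infty}, \] is the unique solution of \[ \Delta X(u)=A_0X(u-m)+X(u-m)A_1,\ \ u\in\mathbb{Z}_0^{\infty},\qquad X(u)=\Psi(u),\ \ u\in\mathbb{Z}_{-m}^{0}. \]
   Context: $\Theta$ and $I$ denote the $d\times d$ zero and identity matrices; $\mathbb{Z}_a^b=\{a,a+1,\dots,b\}$ (with $\mathbb{Z}_a^\infty=\{a,a+1,\dots\}$ and $\mathbb{Z}_{-\infty}^b=\{\dots,b-1,b\}$); $\Delta X(u)=X(u+1)-X(u)$ (so $\Delta\Psi(r-1)=\Psi(r)-\Psi(r-1)$). For integers $a$ and $r\ge0$, $\binom{a}{r}=a(a-1)\cdots(a-r+1)/r!$. Define matrices $Q_{r+1}(rm)$, $r=0,1,2,\dots$, by $Q_1(0)=I$ and $Q_{r+1}(rm)=A_0Q_r((r-1)m)+Q_r((r-1)m)A_1$ for $r\ge1$. Define $Z(u)=\Theta$ for $u\in\mathbb{Z}_{-\infty}^{-m-1}$, $Z(u)=I$ for $u\in\mathbb{Z}_{-m}^{0}$,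 and for each integer $n\ge1$ and $u\in\mathbb{Z}_{(n-1)(m+1)+1}^{n(m+1)}$, \[ Z(u)=\sum_{r=0}^{n}\binom{u-(r-1)m}{r}Q_{r+1}(rm). \] *)

theory Defs
  imports "HOL-Analysis.Analysis"
begin

text \<open>Qmat A0 A1 r is the matrix Q_{r+1}(r m) of the paper:
  Q_1(0) = I, Q_{r+1}(rm) = A0 Q_r((r-1)m) + Q_r((r-1)m) A1.\<close>
fun Qmat :: "real^'n^'n \<Rightarrow> real^'n^'n \<Rightarrow> nat \<Rightarrow> real^'n^'n" where
  "Qmat A0 A1 0 = mat 1"
| "Qmat A0 A1 (Suc r) = A0 ** Qmat A0 A1 r + Qmat A0 A1 r ** A1"

definition ibinom :: "int \<Rightarrow> nat \<Rightarrow> real" where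
  "ibinom a r = (of_int a :: real) gchoose r"

text \<open>The discrete function Z. For u \<ge> 1, the block index n is the unique n \<ge> 1 with
  (n-1)(m+1)+1 \<le> u \<le> n(m+1), i.e. n = (u + m) div (m + 1).\<close>
definition Zmat :: "real^'n^'n \<Rightarrow> real^'n^'n \<Rightarrow> nat \<Rightarrow> int \<Rightarrow> real^'n^'n" where
  "Zmat A0 A1 m u =
     (if u < - int m then 0
      else if u \<le> 0 then mat 1
      else (\<Sum>r\<in>{0..nat ((u + int m) div (int m + 1))}.
              ibinom (u - (int r - 1) * int m) r *\<^sub>R Qmat A0 A1 r))"

end

theory Submission imports Defs begin
lemma mm_zero_left: "(0::real^'n^'n) ** B = 0"
  by (simp add: vec_eq_iff matrix_matrix_mult_def)
lemma mm_zero_right: "(B::real^'n^'n) ** 0 = 0"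
  by (simp add: vec_eq_iff matrix_matrix_mult_def)
lemma mm_add_left: "((A::real^'n^'n) + B) ** C = A ** C + B ** C"
  by (simp add: vec_eq_iff matrix_matrix_mult_def sum.distrib algebra_simps)
lemma mm_sum_left: "(\<Sum>i\<in>S. (f i::real^'n^'n)) ** (B::real^'n^'n) = (\<Sum>i\<in>S. f i ** B)"
  by (induction S rule: infinite_finite_induct) (simp_all add: mm_add_left mm_zero_left)
lemma mm_sum_right: "(B::real^'n^'n) ** (\<Sum>i\<in>S. (f i::real^'n^'n)) = (\<Sum>i\<in>S. B ** f i)"
  by (induction S rule: infinite_finite_induct) (simp_all add: matrix_add_ldistrib mm_zero_right)
lemma mm_scaleR_left: "(c *\<^sub>R (A::real^'n^'n)) ** B = c *\<^sub>R (A ** B)"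
  by (simp add: vec_eq_iff matrix_matrix_mult_def sum_distrib_left mult.assoc)
lemma mm_scaleR_right: "(A::real^'n^'n) ** (c *\<^sub>R B) = c *\<^sub>R (A ** B)"
  by (simp add: vec_eq_iff matrix_matrix_mult_def sum_distrib_left algebra_simps)
lemma mm_diff_left: "((A::real^'n^'n) - B) ** C = A ** C - B ** C"
  by (simp add: vec_eq_iff matrix_matrix_mult_def sum_subtractf algebra_simps)
lemma mm_diff_right: "(C::real^'n^'n) ** (A - B) = C ** A - C ** B"
  by (simp add: vec_eq_iff matrix_matrix_mult_def sum_subtractf algebra_simps)

lemma le_div_iff_int: "(b::int) > 0 \<Longrightarrow> r \<le> a div b \<longleftrightarrow> r * b \<le> a"
proof
  assume b: "b > 0" and "r \<le> a div b"
  then have "r * b \<le> (a div b) * b" by (simp add: mult_right_mono)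
  also have "\<dots> \<le> a" using b by (metis div_mult_mod_eq le_add_same_cancel1 pos_mod_sign)
  finally show "r * b \<le> a" .
next
  assume b: "b > 0" and "r * b \<le> a"
  then show "r \<le> a div b" by (metis zdiv_mono1 less_irrefl nonzero_mult_div_cancel_right)
qed

definition cc :: "nat \<Rightarrow> int \<Rightarrow> nat \<Rightarrow> real" where
  "cc m u r = (if u - (int r - 1) * int m \<ge> 0 then real (nat (u - (int r - 1) * int m) choose r) else 0)"

lemma cc_zero: assumes "int r * (int m + 1) > u + int m" shows "cc m u r = 0"
proof -
  have "u - (int r - 1) * int m < int r" using assms by (simp add: algebra_simps)
  then show ?thesis unfolding cc_def by auto
qed

lemma cc_pascal: "cc m (u+1) (Suc r) - cc m u (Suc r) = cc m (u - int m) r"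
proof -
  define b where "b = u - int r * int m"
  have e1: "u + 1 - (int (Suc r) - 1) * int m = b + 1" by (simp add: b_def algebra_simps)
  have e2: "u - (int (Suc r) - 1) * int m = b" by (simp add: b_def algebra_simps)
  have e3: "u - int m - (int r - 1) * int m = b" by (simp add: b_def algebra_simps)
  show ?thesis
  proof (cases "b \<ge> 0")
    case True
    then have "nat (b+1) = Suc (nat b)" by simp
    then show ?thesis unfolding cc_def e1 e2 e3 using True by simp
  next
    case False
    then show ?thesis unfolding cc_def e1 e2 e3 by auto
  qed
qed

lemma cc_0: "u + int m \<ge> 0 \<Longrightarrow> cc m u 0 = 1"
  by (simp add: cc_def)

lemma Z_sum:
  assumes "m \<ge> 1" "int N \<ge> u + int m"
  shows "Zmat A0 A1 m u = (\<Sum>r\<in>{0..N}. cc m u r *\<^sub>R Qmat A0 A1 r)"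
proof (cases "u < - int m")
  case True
  have "cc m u r = 0" for r
  proof (rule cc_zero)
    have "0 \<le> int r * (int m + 1)" by simp
    then show "int r * (int m + 1) > u + int m" using True by linarith
  qed
  then show ?thesis using True by (simp add: Zmat_def)
next
  case False
  show ?thesis
  proof (cases "u \<le> 0")
    case True
    have "cc m u r = 0" if "r \<in> {1..N}" for r
    proof (rule cc_zero)
      have "int r * (int m + 1) = int m + 1 + (int r - 1)*(int m+1)" by (simp add: algebra_simps)
      moreover have "(int r - 1)*(int m+1) \<ge> 0" using that by simp
      ultimately show "int r * (int m + 1) > u + int m" using True by simp
    qed
    then have "(\<Sum>r\<in>{1..N}. cc m u r *\<^sub>R Qmat A0 A1 r) = 0" by simp
    moreover have "{0..N} = insert 0 {1..N}" by auto
    ultimately show ?thesis using True False by (simp add: Zmat_def cc_0)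
  next
    case True2: False
    define n where "n = nat ((u + int m) div (int m + 1))"
    have nle: "n \<le> N"
    proof -
      have "(u + int m) div (int m + 1) \<le> (u + int m) div 1"
        using True2 by (intro zdiv_mono2) auto
      then show ?thesis unfolding n_def using assms(2) by simp
    qed
    have key: "r \<le> n \<longleftrightarrow> int r * (int m + 1) \<le> u + int m" for r
    proof -
      have "(u + int m) div (int m + 1) \<ge> 0"
        by (rule pos_imp_zdiv_nonneg_iff[THEN iffD2]) (use True2 in auto)
      then have "r \<le> n \<longleftrightarrow> int r \<le> (u + int m) div (int m + 1)" unfolding n_def by linarith
      also have "\<dots> \<longleftrightarrow> int r * (int m + 1) \<le> u + int m" by (rule le_div_iff_int) simp
      finally show ?thesis .
    qed
    have Zs: "Zmat A0 A1 m u = (\<Sum>r\<in>{0..n}. ibinom (u - (int r - 1) * int m) r *\<^sub>R Qmat A0 A1 r)"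
      using True2 False by (simp add: Zmat_def n_def)
    also have "\<dots> = (\<Sum>r\<in>{0..n}. cc m u r *\<^sub>R Qmat A0 A1 r)"
    proof (rule sum.cong[OF refl])
      fix r assume "r \<in> {0..n}"
      then have "int r * (int m + 1) \<le> u + int m" using key by auto
      then have ge: "u - (int r - 1) * int m \<ge> int r" by (simp add: algebra_simps)
      then have "of_int (u - (int r - 1) * int m) = (of_nat (nat (u - (int r - 1) * int m)) :: real)"
        by simp
      then show "ibinom (u - (int r - 1) * int m) r *\<^sub>R Qmat A0 A1 r = cc m u r *\<^sub>R Qmat A0 A1 r"
        unfolding ibinom_def cc_def using ge by (simp add: binomial_gbinomial)
    qed
    also have "\<dots> = (\<Sum>r\<in>{0..N}. cc m u r *\<^sub>R Qmat A0 A1 r)"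
    proof (rule sum.mono_neutral_left)
      show "\<forall>i\<in>{0..N} - {0..n}. cc m u i *\<^sub>R Qmat A0 A1 i = 0"
      proof
        fix i assume "i \<in> {0..N} - {0..n}"
        then have "\<not> i \<le> n" by auto
        then have "cc m u i = 0" using key by (intro cc_zero) auto
        then show "cc m u i *\<^sub>R Qmat A0 A1 i = 0" by simp
      qed
    qed (use nle in auto)
    finally show ?thesis .
  qed
qed

lemma Z_rec:
  assumes "m \<ge> 1" "u \<ge> - int m"
  shows "Zmat A0 A1 m (u+1) - Zmat A0 A1 m u = A0 ** Zmat A0 A1 m (u - int m) + Zmat A0 A1 m (u - int m) ** A1"
proof -
  define K where "K = nat (u + 1 + int m)"
  have KS: "int (Suc K) \<ge> u + 1 + int m" "int (Suc K) \<ge> u + int m" "int K \<ge> u - int m + int m"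
    using assms by (auto simp: K_def)
  have "Zmat A0 A1 m (u+1) - Zmat A0 A1 m u
      = (\<Sum>r\<in>{0..Suc K}. (cc m (u+1) r - cc m u r) *\<^sub>R Qmat A0 A1 r)"
    unfolding Z_sum[OF assms(1) KS(1)] Z_sum[OF assms(1) KS(2)]
    by (simp only: sum_subtractf[symmetric] scaleR_diff_left)
  also have "\<dots> = (\<Sum>r\<in>{0..K}. (cc m (u+1) (Suc r) - cc m u (Suc r)) *\<^sub>R Qmat A0 A1 (Suc r))"
  proof -
    have "cc m (u+1) 0 - cc m u 0 = 0" using assms by (simp add: cc_0)
    then show ?thesis by (subst sum.atLeast0_atMost_Suc_shift) (simp del: sum.atLeast0_atMost_Suc)
  qed
  also have "\<dots> = (\<Sum>r\<in>{0..K}. cc m (u - int m) r *\<^sub>R (A0 ** Qmat A0 A1 r + Qmat A0 A1 r ** A1))"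
    by (simp add: cc_pascal)
  also have "\<dots> = A0 ** (\<Sum>r\<in>{0..K}. cc m (u - int m) r *\<^sub>R Qmat A0 A1 r)
      + (\<Sum>r\<in>{0..K}. cc m (u - int m) r *\<^sub>R Qmat A0 A1 r) ** A1"
    by (simp add: mm_sum_left mm_sum_right mm_scaleR_left mm_scaleR_right scaleR_add_right sum.distrib)
  also have "\<dots> = A0 ** Zmat A0 A1 m (u - int m) + Zmat A0 A1 m (u - int m) ** A1"
    unfolding Z_sum[OF assms(1) KS(3)] by (rule refl)
  finally show ?thesis .
qed

lemma telescope: "(\<Sum>r\<in>{a+1..a+int k}. (f r - f (r-1))) = f (a + int k) - (f a :: real^'n^'n)"
proof (induction k)
  case 0 then show ?case by simp
next
  case (Suc k)
  have "{a+1..a+int (Suc k)} = insert (a + int k + 1) {a+1..a+int k}" by auto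
  then show ?case using Suc by (simp add: algebra_simps)
qed

lemma Z_comm:
  assumes "m \<ge> 1" "v \<ge> - int m" "A1 ** P = P ** A1"
  shows "(Zmat A0 A1 m (v+1) - Zmat A0 A1 m v) ** P
     = A0 ** (Zmat A0 A1 m (v - int m) ** P) + (Zmat A0 A1 m (v - int m) ** P) ** A1"
  unfolding Z_rec[OF assms(1,2)] mm_add_left
  by (simp add: matrix_mul_assoc[symmetric] assms(3))

theorem theorem5:
  fixes A0 A1 :: "real^'n^'n" and m :: nat and Psi :: "int \<Rightarrow> real^'n^'n"
    and X :: "int \<Rightarrow> real^'n^'n"
  assumes "m \<ge> 1"
    and "\<forall>u\<in>{- int m..0}. A1 ** Psi u = Psi u ** A1"
  defines "X \<equiv> (\<lambda>u. Zmat A0 A1 m u ** Psi (- int m)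
      + (\<Sum>r\<in>{- int m + 1..0}. Zmat A0 A1 m (u - int m - r) ** (Psi r - Psi (r - 1))))"
  shows "(\<forall>u\<ge>0. X (u + 1) - X u = A0 ** X (u - int m) + X (u - int m) ** A1)
       \<and> (\<forall>u\<in>{- int m..0}. X u = Psi u)
       \<and> (\<forall>Y :: int \<Rightarrow> real^'n^'n.
            (\<forall>u\<ge>0. Y (u + 1) - Y u = A0 ** Y (u - int m) + Y (u - int m) ** A1)
          \<and> (\<forall>u\<in>{- int m..0}. Y u = Psi u)
          \<longrightarrow> (\<forall>u\<ge>- int m. Y u = X u))"
proof -
  define Z where "Z = Zmat A0 A1 m"
  define D where "D = (\<lambda>r. Psi r - Psi (r - 1))"
  have XZ: "X u = Z u ** Psi (- int m) + (\<Sum>r\<in>{- int m + 1..0}. Z (u - int m - r) ** D r)" for u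
    by (simp add: X_def Z_def D_def)
  have cP: "A1 ** Psi (- int m) = Psi (- int m) ** A1" using assms(2) by simp
  have cD: "A1 ** D r = D r ** A1" if "r \<in> {- int m + 1..0}" for r
    using assms(2) that by (auto simp: D_def mm_diff_left mm_diff_right)
  have P1: "X (u + 1) - X u = A0 ** X (u - int m) + X (u - int m) ** A1" if u0: "u \<ge> 0" for u
  proof -
    have "X (u + 1) - X u = (Z (u+1) - Z u) ** Psi (- int m)
        + (\<Sum>r\<in>{- int m + 1..0}. (Z ((u - int m - r) + 1) - Z (u - int m - r)) ** D r)"
      unfolding XZ by (simp add: mm_diff_left sum_subtractf algebra_simps)
    also have "\<dots> = (A0 ** (Z (u - int m) ** Psi (- int m)) + (Z (u - int m) ** Psi (- int m)) ** A1)
        + (\<Sum>r\<in>{- int m + 1..0}. A0 ** (Z (u - int m - r - int m) ** D r) + (Z (u - int m - r - int m) ** D r) ** A1)"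
    proof -
      have "(Z (u+1) - Z u) ** Psi (- int m) = A0 ** (Z (u - int m) ** Psi (- int m)) + (Z (u - int m) ** Psi (- int m)) ** A1"
        unfolding Z_def by (rule Z_comm[OF assms(1) _ cP]) (use u0 in simp)
      moreover have "(Z ((u - int m - r) + 1) - Z (u - int m - r)) ** D r
          = A0 ** (Z (u - int m - r - int m) ** D r) + (Z (u - int m - r - int m) ** D r) ** A1"
        if "r \<in> {- int m + 1..0}" for r
        unfolding Z_def by (rule Z_comm[OF assms(1) _ cD[OF that]]) (use u0 that in simp)
      ultimately show ?thesis by simp
    qed
    also have "\<dots> = A0 ** X (u - int m) + X (u - int m) ** A1"
    proof -
      have e: "u - int m - r - int m = u - int m - int m - r" for r by simp
      show ?thesis unfolding XZ e
        by (simp add: matrix_add_ldistrib mm_add_left mm_sum_left mm_sum_right sum.distrib)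
    qed
    finally show ?thesis .
  qed
  have P2: "X u = Psi u" if u: "u \<in> {- int m..0}" for u
  proof -
    have Zu: "Z u = mat 1" using u by (simp add: Z_def Zmat_def)
    have e: "- int m + int (nat (u + int m)) = u" using u by simp
    have split: "{- int m + 1..0} = {- int m + 1..u} \<union> {u+1..0}"
      using u by auto
    have s2: "(\<Sum>r\<in>{u+1..0}. Z (u - int m - r) ** D r) = 0"
      by (rule sum.neutral) (auto simp: Z_def Zmat_def mm_zero_left)
    have s1: "(\<Sum>r\<in>{- int m + 1..u}. Z (u - int m - r) ** D r)
        = (\<Sum>r\<in>{- int m + 1..u}. D r)"
    proof (rule sum.cong[OF refl])
      fix r assume r: "r \<in> {- int m + 1..u}"
      then have "\<not> u - int m - r < - int m" "u - int m - r \<le> 0" using u by auto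
      then have "Z (u - int m - r) = mat 1" unfolding Z_def Zmat_def by simp
      then show "Z (u - int m - r) ** D r = D r" by simp
    qed
    have tel: "(\<Sum>r\<in>{- int m + 1..u}. D r) = Psi u - Psi (- int m)"
      using telescope[where a="- int m" and k="nat (u + int m)" and f=Psi] unfolding e D_def by simp
    have "X u = Psi (- int m) + (\<Sum>r\<in>{- int m + 1..u}. D r)"
    proof -
      have U: "(\<Sum>r\<in>{- int m + 1..0}. Z (u - int m - r) ** D r)
          = (\<Sum>r\<in>{- int m + 1..u}. Z (u - int m - r) ** D r) + (\<Sum>r\<in>{u+1..0}. Z (u - int m - r) ** D r)"
        unfolding split by (rule sum.union_disjoint) auto
      show ?thesis by (simp only: XZ Zu U s1 s2 matrix_mul_lid add_0_right)
    qed
    also have "\<dots> = Psi u" unfolding tel by simp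
    finally show ?thesis .
  qed
  have P3: "\<forall>u\<ge>- int m. Y u = X u"
    if Y1: "\<forall>u\<ge>0. Y (u + 1) - Y u = A0 ** Y (u - int m) + Y (u - int m) ** A1"
      and Y2: "\<forall>u\<in>{- int m..0}. Y u = Psi u" for Y
  proof -
    have "\<forall>u. - int m \<le> u \<and> u \<le> int k \<longrightarrow> Y u = X u" for k
    proof (induction k)
      case 0
      then show ?case using Y2 P2 by auto
    next
      case (Suc k)
      show ?case
      proof (intro allI impI)
        fix u assume h: "- int m \<le> u \<and> u \<le> int (Suc k)"
        show "Y u = X u"
        proof (cases "u \<le> int k")
          case True then show ?thesis using Suc h by auto
        next
          case False
          then have uk: "u = int k + 1" using h by auto
          have a: "Y (int k + 1) = Y (int k) + (A0 ** Y (int k - int m) + Y (int k - int m) ** A1)"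
            using Y1[rule_format, of "int k"] by (simp add: algebra_simps)
          have b: "X (int k + 1) = X (int k) + (A0 ** X (int k - int m) + X (int k - int m) ** A1)"
            using P1[of "int k"] by (simp add: algebra_simps)
          have "Y (int k) = X (int k)" "Y (int k - int m) = X (int k - int m)"
            using Suc.IH by auto
          then show ?thesis unfolding uk a b by simp
        qed
      qed
    qed
    then show ?thesis by (metis nle_le nonneg_int_cases order.trans)
  qed
  show ?thesis using P1 P2 P3 by blast
qed

end
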